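(* If $G\curvearrowright X$ and $H\curvearrowright Y$ are group actions with $\mathrm{Con}(G\curvearrowright X)=\mathrm{Con}(H\curvearrowright Y)$, then $\tau(G\curvearrowright X)=\tau(H\curvearrowright Y)$.
   Context: For an action $G\curvearrowright X$, an ordered tuple $\mathfrak{g}=(g_1,\dots,g_n)$ of elements of $G$ and a finite partition $\mathcal{E}=\{E_1,\dots,E_m\}$ of $X$ (a configuration pair), a configuration is a tuple $C=(C_0,\dots,C_n)\in\{1,\dots,m\}^{n+1}$ such that some $x\in E_{C_0}$ satisfies $g_i\cdot x\in E_{C_i}$ for $i=1,\dots,n$; the set of these is $\mathrm{Con}(\mathfrak{g},\mathcal{E};X)$, and $\mathrm{Con}(G\curvearrowright X)=\{\mathrm{Con}(\mathfrak{g},\mathcal{E};X): (\mathfrak{g},\mathcal{E})\text{ a configuration pair}\}$. Two actions with equal such collections are called configuration equivalent. A paradoxical decomposition of $G\curvearrowright X$ consists of pairwise disjoint subsets $A_1,\dots,A_n,B_1,\dots,B_m$ of $X$ and elements $g_1,\dots,g_n,h_1,\dots,h_m\in G$ with $X=\bigcup_{i=1}^n g_iA_i=\bigcup_{j=1}^m h_jB_j$. The Tarski number $\tau(G\curvearrowright X)$ is the minimal number of pieces $n+m$ in such a decomposition, and $\infty$ if none exists. *)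

theory Defs
  imports "HOL-Algebra.Group_Action" "HOL-Library.Extended_Nat"
begin

definition is_fin_partition :: "'x set \<Rightarrow> 'x set list \<Rightarrow> bool" where
  "is_fin_partition X Es \<longleftrightarrow>
     (\<forall>k < length Es. Es ! k \<noteq> {}) \<and>
     (\<forall>k < length Es. \<forall>l < length Es. k \<noteq> l \<longrightarrow> Es ! k \<inter> Es ! l = {}) \<and>
     \<Union> (set Es) = X"

definition config_pair ::
  "('g, 'b) monoid_scheme \<Rightarrow> 'x set \<Rightarrow> 'g list \<Rightarrow> 'x set list \<Rightarrow> bool" where
  "config_pair G X gs Es \<longleftrightarrow> set gs \<subseteq> carrier G \<and> is_fin_partition X Es"

text \<open>Con(gs, Es; X): tuples (C_0,...,C_n) in {1..m}^(n+1), encoded as lists of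
  length n+1, realised by some point x (labels are 1-based, as in the paper).\<close>
definition Con :: "('g \<Rightarrow> 'x \<Rightarrow> 'x) \<Rightarrow> 'g list \<Rightarrow> 'x set list \<Rightarrow> nat list set" where
  "Con \<phi> gs Es = {C. length C = length gs + 1 \<and>
      (\<forall>i < length C. C ! i \<in> {1..length Es}) \<and>
      (\<exists>x. x \<in> Es ! (C ! 0 - 1) \<and>
           (\<forall>i \<in> {1..length gs}. \<phi> (gs ! (i - 1)) x \<in> Es ! (C ! i - 1)))}"

definition Con_action ::
  "('g, 'b) monoid_scheme \<Rightarrow> 'x set \<Rightarrow> ('g \<Rightarrow> 'x \<Rightarrow> 'x) \<Rightarrow> nat list set set" where
  "Con_action G X \<phi> = {Con \<phi> gs Es | gs Es. config_pair G X gs Es}"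

definition paradoxical_decomp ::
  "('g, 'b) monoid_scheme \<Rightarrow> 'x set \<Rightarrow> ('g \<Rightarrow> 'x \<Rightarrow> 'x) \<Rightarrow> nat \<Rightarrow> nat \<Rightarrow>
   (nat \<Rightarrow> 'x set) \<Rightarrow> (nat \<Rightarrow> 'x set) \<Rightarrow> (nat \<Rightarrow> 'g) \<Rightarrow> (nat \<Rightarrow> 'g) \<Rightarrow> bool" where
  "paradoxical_decomp G X \<phi> n m A B g h \<longleftrightarrow>
     (\<forall>i < n. A i \<subseteq> X \<and> g i \<in> carrier G) \<and>
     (\<forall>j < m. B j \<subseteq> X \<and> h j \<in> carrier G) \<and>
     (\<forall>i < n. \<forall>i' < n. i \<noteq> i' \<longrightarrow> A i \<inter> A i' = {}) \<and>
     (\<forall>j < m. \<forall>j' < m. j \<noteq> j' \<longrightarrow> B j \<inter> B j' = {}) \<and>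
     (\<forall>i < n. \<forall>j < m. A i \<inter> B j = {}) \<and>
     X = (\<Union>i<n. \<phi> (g i) ` A i) \<and>
     X = (\<Union>j<m. \<phi> (h j) ` B j)"

text \<open>Tarski number: least n+m over all paradoxical decompositions (Inf {} = \<infinity>).\<close>
definition tarski_number ::
  "('g, 'b) monoid_scheme \<Rightarrow> 'x set \<Rightarrow> ('g \<Rightarrow> 'x \<Rightarrow> 'x) \<Rightarrow> enat" where
  "tarski_number G X \<phi> =
     Inf {enat (n + m) | n m. \<exists>A B g h. paradoxical_decomp G X \<phi> n m A B g h}"

end

theory Submission
  imports Defs
begin

lemma ga_group: "group_action G X \<phi> \<Longrightarrow> group G"
  unfolding group_action_def group_hom_def by auto

lemma transfer:
  fixes G :: "('g, 'b) monoid_scheme" and X :: "'x set" and \<phi> :: "'g \<Rightarrow> 'x \<Rightarrow> 'x"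
    and H :: "('h, 'c) monoid_scheme" and Y :: "'y set" and \<psi> :: "'h \<Rightarrow> 'y \<Rightarrow> 'y"
  assumes GA: "group_action G X \<phi>" and HA: "group_action H Y \<psi>"
    and eq: "Con_action G X \<phi> = Con_action H Y \<psi>"
    and PD: "paradoxical_decomp G X \<phi> n m A B g h"
  shows "\<exists>A' B' g' h'. paradoxical_decomp H Y \<psi> n m A' B' g' h'"
proof -
  interpret GG: group G using ga_group[OF GA] .
  interpret HH: group H using ga_group[OF HA] .
  define piece where "piece k = (if k < n then A k else B (k - n))" for k
  define gel where "gel k = (if k < n then g k else h (k - n))" for k
  have PDu: "\<forall>i < n. A i \<subseteq> X \<and> g i \<in> carrier G"
     "\<forall>j < m. B j \<subseteq> X \<and> h j \<in> carrier G"
     "\<forall>i < n. \<forall>i' < n. i \<noteq> i' \<longrightarrow> A i \<inter> A i' = {}"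
     "\<forall>j < m. \<forall>j' < m. j \<noteq> j' \<longrightarrow> B j \<inter> B j' = {}"
     "\<forall>i < n. \<forall>j < m. A i \<inter> B j = {}"
     "X = (\<Union>i<n. \<phi> (g i) ` A i)"
     "X = (\<Union>j<m. \<phi> (h j) ` B j)"
    using PD unfolding paradoxical_decomp_def by auto
  have piece_disj: "piece k \<inter> piece k' = {}" if "k < n+m" "k' < n+m" "k \<noteq> k'" for k k'
  proof (cases "k < n"; cases "k' < n")
    assume "k < n" "k' < n" then show ?thesis using that PDu(3) by (simp add: piece_def)
  next
    assume "k < n" "\<not> k' < n" then show ?thesis using that PDu(5) by (simp add: piece_def)
  next
    assume a: "\<not> k < n" "k' < n"
    then have "k - n < m" using that by simp
    then show ?thesis using a PDu(5) by (auto simp: piece_def)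
  next
    assume "\<not> k < n" "\<not> k' < n" then show ?thesis using that PDu(4) by (simp add: piece_def)
  qed
  define p where "p z = (if \<exists>k<n+m. z \<in> piece k then THE k. k<n+m \<and> z \<in> piece k else n+m)" for z
  have p_eq: "p z = k" if "k < n+m" "z \<in> piece k" for z k
  proof -
    have "(THE k. k<n+m \<and> z \<in> piece k) = k"
      using that piece_disj by (intro the_equality) auto
    then show ?thesis using that unfolding p_def by auto
  qed
  define L where "L = sorted_list_of_set (p ` X)"
  have finpX: "finite (p ` X)"
  proof (rule finite_subset[of _ "{..n+m}"])
    show "p ` X \<subseteq> {..n+m}"
    proof
      fix z assume "z \<in> p ` X"
      then obtain x where z: "z = p x" by blast
      show "z \<in> {..n+m}"
      proof (cases "\<exists>k<n+m. x \<in> piece k")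
        case True
        then obtain k where "k < n+m" "x \<in> piece k" by blast
        then show ?thesis using p_eq z by auto
      next
        case False
        then have "p x = n+m" unfolding p_def by (rule if_not_P)
        then show ?thesis using z by simp
      qed
    qed
  qed simp
  have setL: "set L = p ` X" and distL: "distinct L" using finpX by (auto simp: L_def)
  define Es where "Es = map (\<lambda>k. {x\<in>X. p x = k}) L"
  define gs where "gs = map (\<lambda>k. inv\<^bsub>G\<^esub> (gel k)) [0..<n+m]"
  have gel_c: "gel k \<in> carrier G" if "k < n+m" for k
    using that PDu(1,2) unfolding gel_def by auto
  have "config_pair G X gs Es"
    unfolding config_pair_def is_fin_partition_def
  proof (intro conjI allI impI)
    show "set gs \<subseteq> carrier G" using gel_c by (auto simp: gs_def)
    fix k assume "k < length Es"
    then show "Es ! k \<noteq> {}" using setL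
      by (auto simp: Es_def) (metis imageE nth_mem)
  next
    fix k l assume "k < length Es" "l < length Es" "k \<noteq> l"
    then show "Es ! k \<inter> Es ! l = {}" using distL
      by (auto simp: Es_def nth_eq_iff_index_eq)
  next
    show "\<Union> (set Es) = X" using setL by (auto simp: Es_def)
  qed
  then have "Con \<phi> gs Es \<in> Con_action G X \<phi>" unfolding Con_action_def by blast
  then have "Con \<phi> gs Es \<in> Con_action H Y \<psi>" using eq by simp
  then obtain ks Fs where cpH: "config_pair H Y ks Fs" and ConEq: "Con \<phi> gs Es = Con \<psi> ks Fs"
    unfolding Con_action_def by auto
  have ksc: "set ks \<subseteq> carrier H" and Fne: "\<forall>k < length Fs. Fs ! k \<noteq> {}"
    and Fdisj: "\<forall>k < length Fs. \<forall>l < length Fs. k \<noteq> l \<longrightarrow> Fs ! k \<inter> Fs ! l = {}"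
    and Fun: "\<Union> (set Fs) = Y"
    using cpH unfolding config_pair_def is_fin_partition_def by auto
  define idx where "idx i = {l. l < length L \<and> l < length Fs \<and> L ! l = i}" for i
  define A' where "A' i = (\<Union>l\<in>idx i. Fs ! l)" for i
  define blk where "blk z = (SOME l. l < length Fs \<and> z \<in> Fs ! l)" for z
  have blk_ok: "blk z < length Fs \<and> z \<in> Fs ! blk z" if "z \<in> Y" for z
  proof -
    from that Fun obtain l where "l < length Fs" "z \<in> Fs ! l" by (auto simp: in_set_conv_nth)
    then show ?thesis unfolding blk_def by (metis (mono_tags, lifting) someI)
  qed
  have key: "\<exists>i. P i \<and> i < n+m \<and> i < length ks \<and> \<psi> (ks ! i) y \<in> A' i"
    if "y \<in> Y" and PP: "\<forall>x\<in>X. \<exists>i. P i \<and> i < n+m \<and> \<phi> (gs ! i) x \<in> piece i" for y P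
  proof -
    define C where "C = map (\<lambda>z. Suc (blk z)) (y # map (\<lambda>k. \<psi> k y) ks)"
    have psiY: "\<psi> (ks ! i) y \<in> Y" if "i < length ks" for i
      using group_action.element_image[OF HA, of "ks ! i" y] ksc that \<open>y \<in> Y\<close> by (meson nth_mem subsetD)
    have "C \<in> Con \<psi> ks Fs"
      unfolding Con_def
    proof (intro CollectI conjI allI impI exI[of _ y] ballI)
      show "length C = length ks + 1" by (simp add: C_def)
      fix i assume "i < length C"
      then show "C ! i \<in> {1..length Fs}"
        using blk_ok[OF \<open>y \<in> Y\<close>] blk_ok[OF psiY]
        by (cases i) (auto simp: C_def Suc_le_eq)
    next
      show "y \<in> Fs ! (C ! 0 - 1)" using blk_ok[OF \<open>y \<in> Y\<close>] by (simp add: C_def)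
    next
      fix i assume "i \<in> {1..length ks}"
      then obtain i' where i': "i = Suc i'" "i' < length ks" by (cases i) auto
      then show "\<psi> (ks ! (i - 1)) y \<in> Fs ! (C ! i - 1)"
        using blk_ok[OF psiY[OF i'(2)]] by (simp add: C_def)
    qed
    then have "C \<in> Con \<phi> gs Es" using ConEq by simp
    then obtain x where lenC: "length C = length gs + 1"
      and Cr: "\<forall>i < length C. C ! i \<in> {1..length Es}"
      and x0: "x \<in> Es ! (C ! 0 - 1)"
      and xi: "\<forall>i \<in> {1..length gs}. \<phi> (gs ! (i - 1)) x \<in> Es ! (C ! i - 1)"
      unfolding Con_def by blast
    have lks: "length ks = n + m" using lenC by (simp add: C_def gs_def)
    have "x \<in> X" using x0 Cr[rule_format, of 0] by (auto simp: Es_def C_def)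
    then obtain i where i: "P i" "i < n+m" "\<phi> (gs ! i) x \<in> piece i" using PP by blast
    have "p (\<phi> (gs ! i) x) = i" using p_eq i by auto
    define l where "l = C ! Suc i - 1"
    have CSi: "C ! Suc i = Suc (blk (\<psi> (ks ! i) y))" using i lks by (simp add: C_def)
    have "Suc i < length C" using i lks by (simp add: C_def)
    then have lE: "l < length Es" using Cr l_def by fastforce
    have "\<phi> (gs ! i) x \<in> Es ! l" using xi[rule_format, of "Suc i"] i by (simp add: l_def gs_def)
    then have "L ! l = i" using lE \<open>p (\<phi> (gs ! i) x) = i\<close> by (simp add: Es_def)
    moreover have lb: "l = blk (\<psi> (ks ! i) y)" using CSi l_def by simp
    ultimately have "l \<in> idx i" using lE blk_ok[OF psiY] i lks by (simp add: idx_def Es_def)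
    then have "\<psi> (ks ! i) y \<in> A' i" using blk_ok[OF psiY] i lks lb
      unfolding A'_def by auto
    then show ?thesis using i lks by auto
  qed
  have gsi: "gs ! i = inv\<^bsub>G\<^esub> (gel i)" if "i < n+m" for i using that by (simp add: gs_def)
  have backk: "\<phi> (inv\<^bsub>G\<^esub> (gel i)) x \<in> piece i" if "i < n+m" "x = \<phi> (gel i) a" "a \<in> piece i" for i x a
  proof -
    have "a \<in> X"
    proof (cases "i < n")
      case True then show ?thesis using that PDu(1) by (auto simp: piece_def)
    next
      case False then have "i - n < m" using that(1) by simp
      then show ?thesis using False that PDu(2) by (auto simp: piece_def)
    qed
    then show ?thesis using group_action.orbit_sym_aux[OF GA gel_c[OF that(1)] \<open>a \<in> X\<close>] that by auto
  qed
  have PA: "\<forall>x\<in>X. \<exists>i. i < n \<and> i < n+m \<and> \<phi> (gs ! i) x \<in> piece i"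
  proof
    fix x assume "x \<in> X"
    then obtain i a where "i < n" "a \<in> A i" "x = \<phi> (g i) a" using PDu(6) by blast
    then show "\<exists>i. i < n \<and> i < n+m \<and> \<phi> (gs ! i) x \<in> piece i"
      using backk[of i x a] gsi[of i] by (intro exI[of _ i]) (auto simp: piece_def gel_def)
  qed
  have PB: "\<forall>x\<in>X. \<exists>i. (n \<le> i) \<and> i < n+m \<and> \<phi> (gs ! i) x \<in> piece i"
  proof
    fix x assume "x \<in> X"
    then obtain j a where "j < m" "a \<in> B j" "x = \<phi> (h j) a" using PDu(7) by blast
    then show "\<exists>i. n \<le> i \<and> i < n+m \<and> \<phi> (gs ! i) x \<in> piece i"
      using backk[of "n+j" x a] gsi[of "n+j"] by (intro exI[of _ "n+j"]) (auto simp: piece_def gel_def)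
  qed
  define g' where "g' i = (if i < length ks then inv\<^bsub>H\<^esub> (ks ! i) else \<one>\<^bsub>H\<^esub>)" for i
  define A2 where "A2 i = A' (n + i)" for i
  define h' where "h' j = g' (n + j)" for j
  have A'Y: "A' i \<subseteq> Y" for i using Fun by (auto simp: A'_def idx_def)
  have g'c: "g' i \<in> carrier H" for i using ksc by (auto simp: g'_def intro!: HH.inv_closed)
  have A'disj: "A' i \<inter> A' i' = {}" if "i \<noteq> i'" for i i'
    using that Fdisj by (auto simp: A'_def idx_def)
  have cover: "Y \<subseteq> (\<Union>i\<in>S. \<psi> (g' i) ` A' i)"
    if KS: "\<forall>y\<in>Y. \<exists>i. i \<in> S \<and> i < length ks \<and> \<psi> (ks ! i) y \<in> A' i" for S
  proof
    fix y assume "y \<in> Y"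
    then obtain i where i: "i \<in> S" "i < length ks" "\<psi> (ks ! i) y \<in> A' i" using KS by blast
    have "ks ! i \<in> carrier H" using i ksc by auto
    then have "\<psi> (g' i) (\<psi> (ks ! i) y) = y"
      using group_action.orbit_sym_aux[OF HA _ \<open>y \<in> Y\<close>] i by (simp add: g'_def)
    then show "y \<in> (\<Union>i\<in>S. \<psi> (g' i) ` A' i)" using i by (metis UN_iff image_eqI)
  qed
  have sub: "(\<Union>i\<in>S. \<psi> (g' i) ` A' i) \<subseteq> Y" for S
    using A'Y g'c group_action.element_image[OF HA] by blast
  have cA: "Y \<subseteq> (\<Union>i<n. \<psi> (g' i) ` A' i)"
    using key[OF _ PA] by (intro cover) auto
  have cB0: "Y \<subseteq> (\<Union>i\<in>{n..<n+m}. \<psi> (g' i) ` A' i)"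
    using key[OF _ PB] by (intro cover) auto
  have UNeq: "(\<Union>i\<in>{n..<n+m}. \<psi> (g' i) ` A' i) = (\<Union>j<m. \<psi> (h' j) ` A2 j)"
  proof (intro equalityI subsetI)
    fix z assume "z \<in> (\<Union>i\<in>{n..<n+m}. \<psi> (g' i) ` A' i)"
    then obtain i where "i\<in>{n..<n+m}" "z \<in> \<psi> (g' i) ` A' i" by blast
    then show "z \<in> (\<Union>j<m. \<psi> (h' j) ` A2 j)" unfolding h'_def A2_def
      by (intro UN_I[of "i-n"]) auto
  next
    fix z assume "z \<in> (\<Union>j<m. \<psi> (h' j) ` A2 j)"
    then obtain j where "j < m" "z \<in> \<psi> (h' j) ` A2 j" by blast
    then show "z \<in> (\<Union>i\<in>{n..<n+m}. \<psi> (g' i) ` A' i)" unfolding h'_def A2_def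
      by (intro UN_I[of "n+j"]) auto
  qed
  then have cB: "Y \<subseteq> (\<Union>j<m. \<psi> (h' j) ` A2 j)" using cB0 by simp
  have "paradoxical_decomp H Y \<psi> n m A' A2 g' h'"
    unfolding paradoxical_decomp_def
  proof (intro conjI allI impI)
    show "Y = (\<Union>i<n. \<psi> (g' i) ` A' i)" using cA sub[of "{..<n}"] by blast
    show "Y = (\<Union>j<m. \<psi> (h' j) ` A2 j)" using cB sub[of "{n..<n+m}"] UNeq by blast
  qed (use A'Y g'c A'disj in \<open>auto simp: A2_def h'_def\<close>)
  then show ?thesis by blast
qed

theorem mainTheorem7:
  fixes G :: "('g, 'b) monoid_scheme" and X :: "'x set" and \<phi> :: "'g \<Rightarrow> 'x \<Rightarrow> 'x"
    and H :: "('h, 'c) monoid_scheme" and Y :: "'y set" and \<psi> :: "'h \<Rightarrow> 'y \<Rightarrow> 'y"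
  assumes "group_action G X \<phi>" and "group_action H Y \<psi>"
    and "Con_action G X \<phi> = Con_action H Y \<psi>"
  shows "tarski_number G X \<phi> = tarski_number H Y \<psi>"
proof -
  have "{enat (n + m) | n m. \<exists>A B g h. paradoxical_decomp G X \<phi> n m A B g h} =
        {enat (n + m) | n m. \<exists>A B g h. paradoxical_decomp H Y \<psi> n m A B g h}"
  proof (intro equalityI subsetI)
    fix z assume "z \<in> {enat (n + m) | n m. \<exists>A B g h. paradoxical_decomp G X \<phi> n m A B g h}"
    then obtain n m A B g h where "z = enat (n+m)" "paradoxical_decomp G X \<phi> n m A B g h" by blast
    with transfer[OF assms] show "z \<in> {enat (n + m) | n m. \<exists>A B g h. paradoxical_decomp H Y \<psi> n m A B g h}"
      by blast
  next
    fix z assume "z \<in> {enat (n + m) | n m. \<exists>A B g h. paradoxical_decomp H Y \<psi> n m A B g h}"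
    then obtain n m A B g h where "z = enat (n+m)" "paradoxical_decomp H Y \<psi> n m A B g h" by blast
    with transfer[OF assms(2,1) assms(3)[symmetric]]
    show "z \<in> {enat (n + m) | n m. \<exists>A B g h. paradoxical_decomp G X \<phi> n m A B g h}"
      by blast
  qed
  then show ?thesis unfolding tarski_number_def by simp
qed

end
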